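(* Let $k$ be a non-archimedean local field of residue characteristic $2$. Let $B(x)=\varpi(x_1^2-\Delta x_2^2)$ on $k^2$, where $\Delta$ is a unit of $\mathfrak o$ with quadratic defect $4\mathfrak o$. Let $z=q^{-\beta}$, $w=zq^{-1}$, and $t\in\mathfrak o\setminus\{0\}$ with $|t|=q^{-T}$. If $2T<e$, then $X^B(\beta;t^2)=0$. If $2T\ge e$, then, writing $(T-e)^+=\max\{T-e,0\}$ and $(T-e)^-=\min\{T-e,0\}$, \[ X^B(\beta;t^2)=\frac{|\varpi|^{\lfloor e/2\rfloor}+z\,|\varpi|^{\lceil e/2\rceil}-z\,w^e\,(zw)^{(T-e)^-}(w+1)}{1-zw} +\frac{w^e\,(z+w^2)\,\bigl(1-w^{2(T-e)^+}\bigr)}{1-w^2}. \]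
   Context: $k$ has ring of integers $\mathfrak o$, uniformizer $\varpi$, residue field of cardinality $q$, absolute value normalized by $|\varpi|=q^{-1}$, and $e=\operatorname{ord}(2)$ is the ramification index. On $\mathfrak o^n$ use the additive Haar measure of total mass $1$. For a quadratic form $B$ on $k^n$, $\rho\in\mathfrak o$ and integer $\ell\ge0$: $X_\ell^B(\rho)=\operatorname{meas}\{x\in\mathfrak o^n: B(x)-\rho\in 2\varpi^\ell\mathfrak o\}$ and $X^B(\beta;\rho)=\sum_{\ell\ge0}z^\ell X_\ell^B(\rho)$ with $z=q^{-\beta}$. The quadratic defect of $\rho\in k$ is the intersection of all ideals $b\mathfrak o$ over those $b\in k$ for which $\rho-b$ is a square in $k$. *)

theory Defs
  imports "HOL-Analysis.Analysis"
begin

text \<open>A field k with a normalized discrete valuation v (v 0 is irrelevant; 0 is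
  always treated separately).  Ring of integers, ideals of the form varpi^m o.\<close>

definition val_ideal :: "('a::field \<Rightarrow> int) \<Rightarrow> int \<Rightarrow> 'a set" where
  "val_ideal v m = {x. x = 0 \<or> m \<le> v x}"

abbreviation ring_int :: "('a::field \<Rightarrow> int) \<Rightarrow> 'a set" where
  "ring_int v \<equiv> val_ideal v 0"

definition principal :: "('a::field \<Rightarrow> int) \<Rightarrow> 'a \<Rightarrow> 'a set" where
  "principal v b = {b * y | y. y \<in> ring_int v}"

definition nonarch_local_field :: "('a::field \<Rightarrow> int) \<Rightarrow> nat \<Rightarrow> bool" where
  "nonarch_local_field v q \<longleftrightarrow>
     (\<forall>x y. x \<noteq> 0 \<longrightarrow> y \<noteq> 0 \<longrightarrow> v (x * y) = v x + v y) \<and>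
     (\<forall>x y. x \<noteq> 0 \<longrightarrow> y \<noteq> 0 \<longrightarrow> x + y \<noteq> 0 \<longrightarrow> min (v x) (v y) \<le> v (x + y)) \<and>
     (\<exists>p. p \<noteq> 0 \<and> v p = 1) \<and>
     finite (ring_int v // {(x, y). x - y \<in> val_ideal v 1}) \<and>
     card (ring_int v // {(x, y). x - y \<in> val_ideal v 1}) = q \<and>
     (\<forall>s :: nat \<Rightarrow> 'a.
        (\<forall>N. \<exists>M. \<forall>m\<ge>M. \<forall>n\<ge>M. s m - s n \<in> val_ideal v N) \<longrightarrow>
        (\<exists>L. \<forall>N. \<exists>M. \<forall>n\<ge>M. s n - L \<in> val_ideal v N))"

definition residue_char_two :: "('a::field \<Rightarrow> int) \<Rightarrow> bool" where
  "residue_char_two v \<longleftrightarrow> (2::'a) \<in> val_ideal v 1"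

definition ord2 :: "('a::field \<Rightarrow> int) \<Rightarrow> enat" where
  "ord2 v = (if (2::'a) = 0 then \<infinity> else enat (nat (v 2)))"

definition quad_defect :: "('a::field \<Rightarrow> int) \<Rightarrow> 'a \<Rightarrow> 'a set" where
  "quad_defect v \<rho> = \<Inter>{principal v b | b. \<exists>s. \<rho> - b = s ^ 2}"

text \<open>Haar measure of total mass 1 on o^2 (for compact open S \<subseteq> o^2):
  limit of (number of cosets of (varpi^m o)^2 meeting S) / q^(2m).\<close>
definition cong2 :: "('a::field \<Rightarrow> int) \<Rightarrow> nat \<Rightarrow> (('a \<times> 'a) \<times> ('a \<times> 'a)) set" where
  "cong2 v m = {((a, b), (c, d)). a - c \<in> val_ideal v (int m) \<and> b - d \<in> val_ideal v (int m)}"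

definition haar2 :: "('a::field \<Rightarrow> int) \<Rightarrow> nat \<Rightarrow> ('a \<times> 'a) set \<Rightarrow> real" where
  "haar2 v q S = lim (\<lambda>m. real (card (S // cong2 v m)) / real q ^ (2 * m))"

definition Xl :: "('a::field \<Rightarrow> int) \<Rightarrow> nat \<Rightarrow> 'a \<Rightarrow> ('a \<times> 'a \<Rightarrow> 'a) \<Rightarrow> 'a \<Rightarrow> nat \<Rightarrow> real" where
  "Xl v q \<pi> B \<rho> l =
     haar2 v q {x \<in> ring_int v \<times> ring_int v. B x - \<rho> \<in> principal v (2 * \<pi> ^ l)}"

end

theory Submission
  imports Defs
begin

locale dv =
  fixes v :: "'a::field \<Rightarrow> int"
  assumes vmult: "x \<noteq> 0 \<Longrightarrow> y \<noteq> 0 \<Longrightarrow> v (x * y) = v x + v y"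
    and vadd: "x \<noteq> 0 \<Longrightarrow> y \<noteq> 0 \<Longrightarrow> x + y \<noteq> 0 \<Longrightarrow> min (v x) (v y) \<le> v (x + y)"
begin

abbreviation I where "I j \<equiv> val_ideal v j"

lemma memI: "x \<in> I j \<longleftrightarrow> x = 0 \<or> j \<le> v x"
  by (simp add: val_ideal_def)

lemma v1: "v 1 = 0"
  using vmult[of 1 1] by simp

lemma vinv: "x \<noteq> 0 \<Longrightarrow> v (inverse x) = - v x"
  using vmult[of x "inverse x"] v1 by simp

lemma vdiv: "x \<noteq> 0 \<Longrightarrow> y \<noteq> 0 \<Longrightarrow> v (x / y) = v x - v y"
  by (simp add: divide_inverse vmult vinv)

lemma vm1: "v (-1) = 0"
  using vmult[of "-1" "-1"] v1 by simp

lemma vneg: "x \<noteq> 0 \<Longrightarrow> v (- x) = v x"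
  using vmult[of "-1" x] vm1 by simp

lemma vpow: "x \<noteq> 0 \<Longrightarrow> v (x ^ n) = int n * v x"
  by (induction n) (simp_all add: v1 vmult algebra_simps)

lemma I0[simp]: "0 \<in> I j" by (simp add: memI)

lemma I_uminus: "x \<in> I j \<Longrightarrow> - x \<in> I j"
  by (cases "x = 0") (auto simp: memI vneg)

lemma I_add: "x \<in> I j \<Longrightarrow> y \<in> I j \<Longrightarrow> x + y \<in> I j"
  using vadd[of x y] by (cases "x = 0"; cases "y = 0"; cases "x + y = 0") (auto simp: memI)

lemma I_diff: "x \<in> I j \<Longrightarrow> y \<in> I j \<Longrightarrow> x - y \<in> I j"
  using I_add[of x j "-y"] I_uminus[of y j] by simp

lemma I_mult: "x \<in> I a \<Longrightarrow> y \<in> I b \<Longrightarrow> x * y \<in> I (a + b)"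
  by (cases "x = 0"; cases "y = 0") (auto simp: memI vmult)

lemma I_mono: "a \<le> b \<Longrightarrow> x \<in> I b \<Longrightarrow> x \<in> I a"
  by (auto simp: memI)

lemma I_v: "x \<in> I (v x)" by (simp add: memI)

lemma I_strict: assumes "x \<noteq> 0" "y \<in> I (v x + 1)"
  shows "x + y \<noteq> 0 \<and> v (x + y) = v x"
proof (cases "y = 0")
  case True then show ?thesis using assms by simp
next
  case False
  then have vy: "v y > v x" using assms by (auto simp: memI)
  have ne: "x + y \<noteq> 0"
  proof
    assume "x + y = 0" then have "y = - x" by (metis add.commute eq_neg_iff_add_eq_0)
    then show False using vy vneg[OF assms(1)] by simp
  qed
  have "v (x + y) \<ge> v x" using vadd[OF assms(1) False ne] vy by simp
  moreover have "v x \<ge> min (v (x + y)) (v (- y))"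
    using vadd[of "x + y" "- y"] ne False assms(1) by simp
  ultimately show ?thesis using ne vneg[OF False] vy by auto
qed

lemma principal_eq: "c \<noteq> 0 \<Longrightarrow> principal v c = I (v c)"
proof -
  assume c: "c \<noteq> 0"
  show ?thesis
  proof (rule set_eqI, rule iffI)
    fix x assume "x \<in> principal v c"
    then obtain y where "x = c * y" "y \<in> I 0" by (auto simp: principal_def)
    then show "x \<in> I (v c)" using I_mult[of c "v c" y 0] by (simp add: memI)
  next
    fix x assume x: "x \<in> I (v c)"
    have "x / c \<in> I 0" using x c by (cases "x = 0") (auto simp: memI vdiv)
    moreover have "x = c * (x / c)" using c by simp
    ultimately show "x \<in> principal v c" unfolding principal_def by blast
  qed
qed

end

lemma class_transport:
  assumes "bij f" "\<And>x y. (x,y) \<in> r \<longleftrightarrow> (f x, f y) \<in> r'"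
  shows "r' `` {f x} = f ` (r `` {x})"
proof (rule set_eqI)
  fix y
  obtain z where z: "y = f z" using assms(1) by (metis bij_pointE)
  show "y \<in> r' `` {f x} \<longleftrightarrow> y \<in> f ` (r `` {x})"
    using assms(1,2) z by (auto simp: bij_def inj_eq)
qed

lemma quot_transport:
  assumes "bij f" "\<And>x y. (x,y) \<in> r \<longleftrightarrow> (f x, f y) \<in> r'"
  shows "(f ` S) // r' = (\<lambda>C. f ` C) ` (S // r)"
  unfolding quotient_def using class_transport[OF assms] by auto

lemma card_quot_transport:
  assumes "bij f" "\<And>x y. (x,y) \<in> r \<longleftrightarrow> (f x, f y) \<in> r'"
  shows "card ((f ` S) // r') = card (S // r)" "finite ((f ` S) // r') \<longleftrightarrow> finite (S // r)"
proof -
  have inj: "inj_on (\<lambda>C. f ` C) (S // r)"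
    using assms(1) unfolding bij_def by (meson inj_image_eq_iff inj_onI)
  show "card ((f ` S) // r') = card (S // r)"
    unfolding quot_transport[OF assms] using card_image[OF inj] .
  show "finite ((f ` S) // r') \<longleftrightarrow> finite (S // r)"
    unfolding quot_transport[OF assms] using finite_image_iff[OF inj] .
qed

context dv begin

definition Rel :: "int \<Rightarrow> ('a \<times> 'a) set" where
  "Rel m = {(x, y). x - y \<in> I m}"

lemma Rel_equiv: "equiv UNIV (Rel m)"
proof (rule equivI)
  show "Rel m \<subseteq> UNIV \<times> UNIV" by simp
  show "refl (Rel m)" by (auto simp: Rel_def refl_on_def)
  show "sym (Rel m)" unfolding Rel_def sym_def using I_uminus by fastforce
  show "trans (Rel m)" unfolding Rel_def trans_def using I_add by fastforce
qed

lemma Rel_refl[simp]: "(x, x) \<in> Rel m" by (simp add: Rel_def)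

lemma Rel_self[simp]: "x \<in> Rel m `` {x}" by simp

lemma quot_image: "A // r = (\<lambda>x. r `` {x}) ` A"
  by (auto simp: quotient_def)

lemma cong2_eq: "cong2 v m = {((a,b),(c,d)). (a,c) \<in> Rel (int m) \<and> (b,d) \<in> Rel (int m)}"
  by (simp add: cong2_def Rel_def)

lemma cong2_class: "cong2 v m `` {(a,b)} = (Rel (int m) `` {a}) \<times> (Rel (int m) `` {b})"
  by (auto simp: cong2_eq)

lemma quot_prod: "(X \<times> Y) // cong2 v m = (\<lambda>(C,D). C \<times> D) ` ((X // Rel (int m)) \<times> (Y // Rel (int m)))"
proof -
  have eqf: "(\<lambda>p. cong2 v m `` {p}) = (\<lambda>(a,b). Rel (int m) `` {a} \<times> Rel (int m) `` {b})"
    by (simp add: fun_eq_iff cong2_class split: prod.split)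
  have "(X \<times> Y) // cong2 v m = (\<lambda>(a,b). Rel (int m) `` {a} \<times> Rel (int m) `` {b}) ` (X \<times> Y)"
    using quot_image[of "X \<times> Y" "cong2 v m"] eqf by metis
  also have "\<dots> = (\<lambda>(C,D). C \<times> D) ` ((X // Rel (int m)) \<times> (Y // Rel (int m)))"
    unfolding quot_image by (auto simp: image_iff)
  finally show ?thesis .
qed

lemma card_quot_prod:
  "card ((X \<times> Y) // cong2 v m) = card (X // Rel (int m)) * card (Y // Rel (int m))"
proof -
  have inj: "inj_on (\<lambda>(C,D). C \<times> D) ((X // Rel (int m)) \<times> (Y // Rel (int m)))"
  proof (rule inj_onI, clarify)
    fix C D C' D'
    assume "C \<in> X // Rel (int m)" "D \<in> Y // Rel (int m)" "C' \<in> X // Rel (int m)" "D' \<in> Y // Rel (int m)"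
      and eq: "C \<times> D = C' \<times> D'"
    moreover have ne: "\<And>X C. C \<in> X // Rel (int m) \<Longrightarrow> C \<noteq> {}"
      by (metis quotientE Rel_self empty_iff)
    ultimately have "C \<noteq> {}" "D \<noteq> {}" "C' \<noteq> {}" "D' \<noteq> {}"
      by auto
    then show "C = C' \<and> D = D'" using eq by (simp add: times_eq_iff)
  qed
  have "card ((X \<times> Y) // cong2 v m) = card ((X // Rel (int m)) \<times> (Y // Rel (int m)))"
    unfolding quot_prod by (rule card_image[OF inj])
  then show ?thesis by (simp only: card_cartesian_product)
qed

end

locale dvp = dv +
  fixes \<pi> :: 'a and q :: nat
  assumes pi_ne: "\<pi> \<noteq> 0" and vpi: "v \<pi> = 1"
    and qfin: "finite (I 0 // {(x, y). x - y \<in> I 1})"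
    and qcard: "card (I 0 // {(x, y). x - y \<in> I 1}) = q"
begin

lemma q_Rel: "finite (I 0 // Rel 1)" "card (I 0 // Rel 1) = q"
proof -
  have "Rel 1 = {(x, y). x - y \<in> I 1}" by (simp add: Rel_def)
  then show "finite (I 0 // Rel 1)" "card (I 0 // Rel 1) = q" using qfin qcard by simp_all
qed

lemma q_pos: "q > 0"
proof -
  have "Rel 1 `` {0} \<in> I 0 // Rel 1" by (rule quotientI) (rule I0)
  then have "I 0 // Rel 1 \<noteq> {}" using equals0D by metis
  then have "card (I 0 // Rel 1) > 0" using q_Rel(1) by (metis card_gt_0_iff)
  then show ?thesis by (simp only: q_Rel(2))
qed

lemma vpipow: "v (\<pi> ^ n) = int n"
  using vpow[OF pi_ne] vpi by simp

lemma pipow_ne: "\<pi> ^ n \<noteq> 0" using pi_ne by simp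

lemma scale_I: "x \<in> I a \<longleftrightarrow> \<pi> ^ n * x \<in> I (a + int n)"
proof (cases "x = 0")
  case True then show ?thesis by simp
next
  case False
  have ne: "\<pi> ^ n * x \<noteq> 0" using False pipow_ne[of n] by simp
  have "v (\<pi> ^ n * x) = int n + v x" using vmult[OF pipow_ne False] vpipow by simp
  then show ?thesis using False ne unfolding memI by linarith
qed

lemma scale_bij: "bij (\<lambda>x. \<pi> ^ n * x)"
proof (rule bij_betwI')
  show "\<And>x y. (\<pi> ^ n * x = \<pi> ^ n * y) = (x = y)" using pipow_ne[of n] by (meson mult_left_cancel)
  show "\<And>y. y \<in> UNIV \<Longrightarrow> \<exists>x\<in>UNIV. y = \<pi> ^ n * x"
  proof -
    fix y have "y = \<pi> ^ n * (y / \<pi> ^ n)" using pipow_ne[of n] by simp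
    then show "\<exists>x\<in>UNIV. y = \<pi> ^ n * x" by blast
  qed
qed simp

lemma scale_image: "(\<lambda>x. \<pi> ^ n * x) ` I a = I (a + int n)"
proof (rule set_eqI, rule iffI)
  fix y assume "y \<in> (\<lambda>x. \<pi> ^ n * x) ` I a"
  then obtain x where "x \<in> I a" "y = \<pi> ^ n * x" by blast
  then show "y \<in> I (a + int n)" using scale_I[of x a n] by simp
next
  fix y assume y: "y \<in> I (a + int n)"
  have "y = \<pi> ^ n * (y / \<pi> ^ n)" using pipow_ne[of n] by simp
  moreover have "y / \<pi> ^ n \<in> I a"
  proof -
    have "\<pi> ^ n * (y / \<pi> ^ n) \<in> I (a + int n)" using y pipow_ne[of n] by simp
    then show ?thesis using scale_I[of "y / \<pi> ^ n" a n] by blast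
  qed
  ultimately show "y \<in> (\<lambda>x. \<pi> ^ n * x) ` I a" by (rule image_eqI)
qed

lemma card_scale: "card (I (int j) // Rel (int j + int n)) = card (I 0 // Rel (int n))
   \<and> (finite (I (int j) // Rel (int j + int n)) \<longleftrightarrow> finite (I 0 // Rel (int n)))"
proof -
  have resp: "\<And>x y. (x,y) \<in> Rel (int n) \<longleftrightarrow> ((\<pi>^j * x), (\<pi>^j * y)) \<in> Rel (int j + int n)"
  proof -
    fix x y
    have "(x,y) \<in> Rel (int n) \<longleftrightarrow> \<pi>^j * (x - y) \<in> I (int n + int j)"
      unfolding Rel_def using scale_I[of "x - y" "int n" j] by simp
    also have "\<dots> \<longleftrightarrow> ((\<pi>^j * x), (\<pi>^j * y)) \<in> Rel (int j + int n)"
      unfolding Rel_def by (simp add: right_diff_distrib add.commute)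
    finally show "?thesis x y" .
  qed
  have img: "(\<lambda>x. \<pi> ^ j * x) ` I 0 = I (int j)" using scale_image[of j 0] by simp
  note c = card_quot_transport[OF scale_bij resp, of "I 0"]
  show ?thesis using c by (simp only: img)
qed

end

context dvp begin

lemma I_sub0: "j \<ge> 0 \<Longrightarrow> I j \<subseteq> I 0"
  using I_mono by blast

lemma quot_sub: "A \<subseteq> B \<Longrightarrow> A // r \<subseteq> B // r"
  unfolding quotient_def by blast

lemma class_eq_iff: "(Rel m `` {x} = Rel m `` {y}) \<longleftrightarrow> (x, y) \<in> Rel m"
  using Rel_equiv[of m] by (simp add: equiv_class_eq_iff)

lemma translate_bij: "bij (\<lambda>y. y - (x::'a))"
proof (rule bij_betwI')
  show "\<And>y. y \<in> UNIV \<Longrightarrow> \<exists>z\<in>UNIV. y = z - x"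
  proof -
    fix y have "y = (y + x) - x" by simp
    then show "\<exists>z\<in>UNIV. y = z - x" by blast
  qed
qed simp_all

lemma translate_class: "(\<lambda>y. y - x) ` (Rel m `` {x}) = I m"
proof (rule set_eqI, rule iffI)
  fix z assume "z \<in> (\<lambda>y. y - x) ` (Rel m `` {x})"
  then obtain y where "x - y \<in> I m" "z = y - x" by (auto simp: Rel_def)
  then show "z \<in> I m" using I_uminus[of "x - y" m] by simp
next
  fix z assume z: "z \<in> I m"
  have "x - (z + x) \<in> I m" using I_uminus[OF z] by simp
  then have "z + x \<in> Rel m `` {x}" by (simp add: Rel_def)
  moreover have "z = (z + x) - x" by simp
  ultimately show "z \<in> (\<lambda>y. y - x) ` (Rel m `` {x})" by (rule rev_image_eqI)
qed

lemma card_class: "card ((Rel (int n) `` {x}) // Rel (int n + 1)) = q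
  \<and> finite ((Rel (int n) `` {x}) // Rel (int n + 1))"
proof -
  have resp: "\<And>a b. (a, b) \<in> Rel (int n + 1) \<longleftrightarrow> (a - x, b - x) \<in> Rel (int n + 1)"
    by (simp add: Rel_def)
  note c = card_quot_transport[OF translate_bij resp, of "Rel (int n) `` {x}"]
  have "card ((Rel (int n) `` {x}) // Rel (int n + 1)) = card (I (int n) // Rel (int n + 1))"
    "finite ((Rel (int n) `` {x}) // Rel (int n + 1)) = finite (I (int n) // Rel (int n + 1))"
    using c by (simp_all only: translate_class)
  moreover have "card (I (int n) // Rel (int n + int 1)) = card (I 0 // Rel (int 1))"
     "finite (I (int n) // Rel (int n + int 1)) = finite (I 0 // Rel (int 1))"
    using card_scale[of n 1] by blast+
  ultimately show ?thesis using q_Rel by simp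
qed

lemma card_I0: "card (I 0 // Rel (int n)) = q ^ n \<and> finite (I 0 // Rel (int n))"
proof (induction n)
  case 0
  have "I 0 // Rel 0 = {I 0}"
  proof -
    have "\<And>x. x \<in> I 0 \<Longrightarrow> Rel 0 `` {x} = I 0"
    proof (rule set_eqI, rule iffI)
      fix x y assume x: "x \<in> I 0" and "y \<in> Rel 0 `` {x}"
      then have "x - y \<in> I 0" by (simp add: Rel_def)
      then have "x - (x - y) \<in> I 0" using I_diff[OF x] by blast
      then show "y \<in> I 0" by simp
    next
      fix x y assume "x \<in> I 0" "y \<in> I 0"
      then show "y \<in> Rel 0 `` {x}" using I_diff by (simp add: Rel_def)
    qed
    moreover have "(0::'a) \<in> I 0" by simp
    ultimately show ?thesis unfolding quotient_def by blast
  qed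
  then show ?case by simp
next
  case (Suc n)
  let ?Q = "I 0 // Rel (int n)"
  let ?A = "\<lambda>C. C // Rel (int n + 1)"
  have eq: "I 0 // Rel (int (Suc n)) = \<Union> (?A ` ?Q)"
  proof (rule set_eqI, rule iffI)
    fix D assume "D \<in> I 0 // Rel (int (Suc n))"
    then obtain x where x0: "x \<in> I 0" "D = Rel (int (Suc n)) `` {x}" by (rule quotientE)
    then have x: "x \<in> I 0" "D = Rel (int n + 1) `` {x}" by (simp_all add: add.commute)
    have "Rel (int n) `` {x} \<in> ?Q" using x(1) by (rule quotientI)
    moreover have "D \<in> ?A (Rel (int n) `` {x})" using x(2) by (auto intro: quotientI)
    ultimately show "D \<in> \<Union> (?A ` ?Q)" by blast
  next
    fix D assume "D \<in> \<Union> (?A ` ?Q)"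
    then obtain C where C: "C \<in> ?Q" "D \<in> ?A C" by blast
    then obtain x where x: "x \<in> I 0" "C = Rel (int n) `` {x}" by (auto elim!: quotientE)
    obtain y where y: "y \<in> C" "D = Rel (int n + 1) `` {y}" using C(2) by (auto elim!: quotientE)
    have "x - y \<in> I (int n)" using x y by (simp add: Rel_def)
    then have "x - y \<in> I 0" using I_mono[of 0 "int n"] by simp
    then have "x - (x - y) \<in> I 0" using I_diff[OF x(1)] by blast
    then have "y \<in> I 0" by simp
    then show "D \<in> I 0 // Rel (int (Suc n))" using y(2) by (auto intro: quotientI simp: add.commute)
  qed
  have fin: "finite ?Q" using Suc.IH by blast
  have fins: "\<forall>C\<in>?Q. finite (?A C)" using card_class by (auto elim!: quotientE)
  have disj: "\<forall>C\<in>?Q. \<forall>C'\<in>?Q. C \<noteq> C' \<longrightarrow> ?A C \<inter> ?A C' = {}"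
  proof (intro ballI impI)
    fix C C' assume C: "C \<in> ?Q" "C' \<in> ?Q" "C \<noteq> C'"
    obtain x where x: "C = Rel (int n) `` {x}" using C(1) by (auto elim!: quotientE)
    obtain x' where x': "C' = Rel (int n) `` {x'}" using C(2) by (auto elim!: quotientE)
    show "?A C \<inter> ?A C' = {}"
    proof (rule ccontr)
      assume "?A C \<inter> ?A C' \<noteq> {}"
      then obtain D where D: "D \<in> ?A C" "D \<in> ?A C'" by blast
      obtain y where y: "y \<in> C" "D = Rel (int n + 1) `` {y}" using D(1) by (auto elim!: quotientE)
      obtain y' where y': "y' \<in> C'" "D = Rel (int n + 1) `` {y'}" using D(2) by (auto elim!: quotientE)
      have "(y, y') \<in> Rel (int n + 1)" using y y' class_eq_iff by metis
      then have yy: "(y, y') \<in> Rel (int n)" unfolding Rel_def using I_mono[of "int n" "int n + 1"] by auto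
      have "(x, y) \<in> Rel (int n)" "(x', y') \<in> Rel (int n)" using x y x' y' by auto
      then have "(x, x') \<in> Rel (int n)" using yy Rel_equiv[of "int n"]
        unfolding equiv_def by (meson sym_def trans_def)
      then have "C = C'" using x x' class_eq_iff by metis
      then show False using C(3) by blast
    qed
  qed
  have "card (I 0 // Rel (int (Suc n))) = (\<Sum>C\<in>?Q. card (?A C))"
    unfolding eq by (rule card_UN_disjoint[OF fin fins disj])
  also have "\<dots> = (\<Sum>C\<in>?Q. q)"
    by (rule sum.cong) (auto simp: card_class elim!: quotientE)
  also have "\<dots> = q ^ Suc n" using Suc.IH by simp
  finally show ?case using eq fin fins by simp
qed

lemma card_Ij: "j \<le> m \<Longrightarrow> card (I (int j) // Rel (int m)) = q ^ (m - j) \<and> finite (I (int j) // Rel (int m))"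
  using card_scale[of j "m - j"] card_I0[of "m - j"] by simp

end

lemma lim_eventually_const:
  assumes "\<And>m. m \<ge> M \<Longrightarrow> f m = (c::real)"
  shows "lim f = c"
proof (rule limI)
  show "f \<longlonglongrightarrow> c"
    by (rule tendsto_eventually) (use assms in \<open>auto simp: eventually_sequentially\<close>)
qed

lemma haar2_empty: "haar2 v q {} = 0"
  unfolding haar2_def by (simp add: lim_eventually_const)

context dvp begin

lemma haar_box:
  assumes s: "s \<in> I 0"
  shows "haar2 v q {p. fst p - s * snd p \<in> I (int A) \<and> snd p \<in> I (int B)} = (1 / real q) ^ (A + B)"
proof -
  let ?S = "{p. fst p - s * snd p \<in> I (int A) \<and> snd p \<in> I (int B)}"
  define \<Phi> where "\<Phi> = (\<lambda>p::'a \<times> 'a. (fst p - s * snd p, snd p))"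
  have bij: "bij \<Phi>"
  proof (rule bij_betwI')
    show "\<And>x y. x \<in> UNIV \<Longrightarrow> y \<in> UNIV \<Longrightarrow> (\<Phi> x = \<Phi> y) = (x = y)"
      unfolding \<Phi>_def by (auto simp: prod_eq_iff)
    show "\<And>y. y \<in> UNIV \<Longrightarrow> \<exists>x\<in>UNIV. y = \<Phi> x"
    proof -
      fix y :: "'a \<times> 'a"
      have "y = \<Phi> (fst y + s * snd y, snd y)" unfolding \<Phi>_def by simp
      then show "\<exists>x\<in>UNIV. y = \<Phi> x" by blast
    qed
  qed simp
  have img: "\<Phi> ` ?S = I (int A) \<times> I (int B)"
  proof (rule set_eqI, rule iffI)
    fix y assume "y \<in> \<Phi> ` ?S" then show "y \<in> I (int A) \<times> I (int B)" unfolding \<Phi>_def by auto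
  next
    fix y :: "'a \<times> 'a" assume y: "y \<in> I (int A) \<times> I (int B)"
    have "y = \<Phi> (fst y + s * snd y, snd y)" unfolding \<Phi>_def by simp
    moreover have "(fst y + s * snd y, snd y) \<in> ?S" using y by auto
    ultimately show "y \<in> \<Phi> ` ?S" by (rule image_eqI)
  qed
  have ev: "real (card (?S // cong2 v m)) / real q ^ (2 * m) = (1 / real q) ^ (A + B)"
    if m: "m \<ge> A + B" for m
  proof -
    have resp: "\<And>x y. (x, y) \<in> cong2 v m \<longleftrightarrow> (\<Phi> x, \<Phi> y) \<in> cong2 v m"
    proof -
      fix x y :: "'a \<times> 'a"
      obtain a b where x: "x = (a, b)" by fastforce
      obtain c d where y: "y = (c, d)" by fastforce
      have e1: "(a - s * b) - (c - s * d) = (a - c) - s * (b - d)" by (simp add: algebra_simps)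
      have e2: "a - c = ((a - s * b) - (c - s * d)) + s * (b - d)" by (simp add: algebra_simps)
      have "b - d \<in> I (int m) \<Longrightarrow> s * (b - d) \<in> I (int m)" using I_mult[OF s] by fastforce
      then show "?thesis x y" unfolding x y \<Phi>_def cong2_def
      proof (simp only: fst_conv snd_conv mem_Collect_eq prod.case, intro iffI conjI)
        assume h: "b - d \<in> I (int m) \<Longrightarrow> s * (b - d) \<in> I (int m)"
        assume "a - c \<in> I (int m) \<and> b - d \<in> I (int m)"
        then show "a - s * b - (c - s * d) \<in> I (int m)" "b - d \<in> I (int m)"
          using h I_diff e1 by metis+
      next
        assume h: "b - d \<in> I (int m) \<Longrightarrow> s * (b - d) \<in> I (int m)"
        assume "a - s * b - (c - s * d) \<in> I (int m) \<and> b - d \<in> I (int m)"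
        then show "a - c \<in> I (int m)" "b - d \<in> I (int m)"
          using h I_add e2 by metis+
      qed
    qed
    have "card (?S // cong2 v m) = card ((I (int A) \<times> I (int B)) // cong2 v m)"
      using card_quot_transport(1)[OF bij resp, of ?S] img by simp
    also have "\<dots> = q ^ (m - A) * q ^ (m - B)"
      using card_quot_prod card_Ij[of A m] card_Ij[of B m] m by simp
    finally have c: "real (card (?S // cong2 v m)) = real q ^ (m - A) * real q ^ (m - B)" by simp
    have "real q ^ (m - A) * real q ^ (m - B) * real q ^ (A + B) = real q ^ (2 * m)"
    proof -
      have "(m - A) + (m - B) + (A + B) = 2 * m" using m by simp
      then show ?thesis unfolding power_add[symmetric] by (simp only:)
    qed
    moreover have "real q > 0" using q_pos by simp
    ultimately show ?thesis unfolding c by (simp add: field_simps)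
  qed
  show ?thesis unfolding haar2_def by (rule lim_eventually_const[of "A + B"]) (rule ev)
qed

end

context dvp begin

lemma I_of: "j \<le> v x \<Longrightarrow> x \<in> I j" by (simp add: memI)

lemma notI: "x \<noteq> 0 \<Longrightarrow> x \<in> I j \<longleftrightarrow> j \<le> v x" by (simp add: memI)

lemma v2sq: "x \<noteq> 0 \<Longrightarrow> v (x ^ 2) = 2 * v x"
  using vpow[of x 2] by simp

lemma one_I0: "1 \<in> I 0" by (simp add: memI v1)

lemma quad_defect_mem: "y \<in> quad_defect v D \<longleftrightarrow> (\<forall>b r. D - b = r ^ 2 \<longrightarrow> y \<in> principal v b)"
  unfolding quad_defect_def by auto

lemma four_v: "(2::'a) \<noteq> 0 \<Longrightarrow> v (4::'a) = 2 * v 2"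
  using vmult[of "2::'a" 2] by simp

lemma def_ii:
  assumes two: "(2::'a) \<noteq> 0" and qd: "quad_defect v D = principal v 4"
  shows "D - y ^ 2 \<noteq> 0 \<and> v (D - y ^ 2) \<le> 2 * v 2"
proof -
  let ?b = "D - y ^ 2"
  have four: "(4::'a) \<noteq> 0" using two by (metis mult_2_right mult_eq_0_iff numeral_Bit0 one_add_one)
  have "(4::'a) \<in> principal v 4" unfolding principal_def using one_I0 by force
  moreover have "D - ?b = y ^ 2" by simp
  ultimately have "(4::'a) \<in> principal v ?b" unfolding qd[symmetric] quad_defect_mem by blast
  then obtain c where c: "4 = ?b * c" "c \<in> I 0" by (auto simp: principal_def)
  then have nz: "?b \<noteq> 0" "c \<noteq> 0" using four by auto
  then have "v 4 = v ?b + v c" using c(1) vmult[OF nz] by simp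
  moreover have "v c \<ge> 0" using c nz by (simp add: memI)
  ultimately show ?thesis using nz four_v[OF two] by simp
qed

lemma def_i:
  assumes two: "(2::'a) \<noteq> 0" and qd: "quad_defect v D = principal v 4" and e1: "v 2 \<ge> 1"
  shows "\<exists>s. 2 * v 2 \<le> v (D - s ^ 2)"
proof (rule ccontr)
  assume "\<not> ?thesis"
  then have lt: "\<And>s. v (D - s ^ 2) < 2 * v 2" by (simp add: not_le)
  define y where "y = \<pi> ^ nat (2 * v 2 - 1)"
  have yne: "y \<noteq> 0" unfolding y_def using pipow_ne .
  have vy: "v y = 2 * v 2 - 1" unfolding y_def vpipow using e1 by simp
  have "y \<in> quad_defect v D"
    unfolding quad_defect_mem
  proof (intro allI impI)
    fix b r assume h: "D - b = r ^ 2"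
    then have b: "b = D - r ^ 2" by (simp add: algebra_simps)
    have bne: "b \<noteq> 0" using def_ii[OF two qd, of r] b by simp
    have "v b < 2 * v 2" using lt b by simp
    then show "y \<in> principal v b" unfolding principal_eq[OF bne] using vy by (simp add: memI)
  qed
  then have "y \<in> I (v 4)" using qd principal_eq[of 4] two
    by (metis four_v mult_2_right mult_eq_0_iff numeral_Bit0 one_add_one)
  then show False using yne vy four_v[OF two] by (simp add: memI)
qed

lemma I_mult': "x \<in> I a \<Longrightarrow> y \<in> I b \<Longrightarrow> c \<le> a + b \<Longrightarrow> x * y \<in> I c"
  using I_mult I_mono by blast

lemma N_ident: "(x1::'a) ^ 2 - D * x2 ^ 2 = (x1 - s * x2) ^ 2 + (2 * s * x2 * (x1 - s * x2) - (D - s ^ 2) * x2 ^ 2)"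
  by (simp add: algebra_simps power2_eq_square)

lemma Kval:
  assumes two: "(2::'a) \<noteq> 0" and qd: "quad_defect v D = principal v 4"
    and sb: "v (D - s ^ 2) = 2 * v 2" "D - s ^ 2 \<noteq> 0" and s0: "s \<noteq> 0" "v s = 0"
    and nz: "x1 \<noteq> 0 \<or> x2 \<noteq> 0"
  shows "x1 ^ 2 - D * x2 ^ 2 \<noteq> 0 \<and> (\<exists>h. v (x1 ^ 2 - D * x2 ^ 2) = 2 * h \<and>
           (\<forall>j. (x1 - s * x2 \<in> I j \<and> x2 \<in> I (j - v 2)) \<longleftrightarrow> j \<le> h))"
proof -
  let ?N = "x1 ^ 2 - D * x2 ^ 2"
  let ?d = "x1 - s * x2"
  let ?b = "D - s ^ 2"
  let ?e = "v (2::'a)"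
  have sI: "s \<in> I 0" using s0 by (simp add: memI)
  have twoI: "(2::'a) \<in> I ?e" by (rule I_v)
  show ?thesis
  proof (cases "x2 = 0")
    case True
    then have x1: "x1 \<noteq> 0" using nz by simp
    have "?N = x1 ^ 2" using True by simp
    moreover have "v (x1 ^ 2) = 2 * v x1" using v2sq[OF x1] .
    moreover have "\<forall>j. (?d \<in> I j \<and> x2 \<in> I (j - ?e)) \<longleftrightarrow> j \<le> v x1"
      using True x1 by (simp add: memI)
    ultimately show ?thesis using x1 by auto
  next
    case x2: False
    show ?thesis
    proof (cases "?d \<noteq> 0 \<and> v ?d < ?e + v x2")
      case True
      then have d: "?d \<noteq> 0" and lt: "v ?d < ?e + v x2" by auto
      have t1: "2 * s * x2 * ?d \<in> I (2 * v ?d + 1)"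
      proof -
        have "2 * s \<in> I (?e + 0)" using I_mult[OF twoI sI] .
        then have "2 * s * x2 \<in> I (?e + 0 + v x2)" using I_mult I_v by blast
        then show ?thesis using I_mult'[OF _ I_v[of ?d]] lt by simp
      qed
      have t2: "?b * x2 ^ 2 \<in> I (2 * v ?d + 1)"
      proof -
        have "x2 ^ 2 \<in> I (2 * v x2)" using v2sq[OF x2] I_v[of "x2^2"] by simp
        then show ?thesis using I_mult'[OF I_v[of ?b]] sb lt by simp
      qed
      have R: "2 * s * x2 * ?d - ?b * x2 ^ 2 \<in> I (v (?d ^ 2) + 1)"
        using I_diff[OF t1 t2] v2sq[OF d] by simp
      have dd: "?d ^ 2 \<noteq> 0" using d by simp
      have "?N \<noteq> 0 \<and> v ?N = v (?d ^ 2)"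
        using I_strict[OF dd R] N_ident[of x1 D x2 s] by simp
      moreover have "\<forall>j. (?d \<in> I j \<and> x2 \<in> I (j - ?e)) \<longleftrightarrow> j \<le> v ?d"
        using d x2 lt by (auto simp: memI)
      ultimately show ?thesis using v2sq[OF d] by auto
    next
      case False
      then have ge: "?d = 0 \<or> ?e + v x2 \<le> v ?d" by auto
      define y where "y = x1 / x2"
      have Ny: "?N = - (D - y ^ 2) * x2 ^ 2" unfolding y_def using x2
        by (simp add: field_simps power2_eq_square)
      have dy: "D - y ^ 2 \<noteq> 0" "v (D - y ^ 2) \<le> 2 * ?e" using def_ii[OF two qd] by auto
      have Nne: "?N \<noteq> 0" using Ny dy x2 by simp
      have "v ?N = v (- (D - y ^ 2)) + v (x2 ^ 2)"
        unfolding Ny by (rule vmult) (use dy x2 in auto)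
      then have vN: "v ?N = v (D - y ^ 2) + 2 * v x2"
        using vneg[OF dy(1)] v2sq[OF x2] by simp
      have x2sq: "x2 ^ 2 \<in> I (2 * v x2)" using v2sq[OF x2] I_v[of "x2^2"] by simp
      have dI: "?d \<in> I (?e + v x2)" using ge by (auto simp: memI)
      have t0: "?d ^ 2 \<in> I (2 * ?e + 2 * v x2)"
        using I_mult'[OF dI dI] by (simp add: power2_eq_square)
      have t1: "2 * s * x2 * ?d \<in> I (2 * ?e + 2 * v x2)"
      proof -
        have "2 * s \<in> I (?e + 0)" using I_mult[OF twoI sI] .
        then have "2 * s * x2 \<in> I (?e + 0 + v x2)" using I_mult I_v by blast
        then show ?thesis using I_mult'[OF _ dI] by simp
      qed
      have t2: "?b * x2 ^ 2 \<in> I (2 * ?e + 2 * v x2)"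
        using I_mult'[OF I_v[of ?b] x2sq] sb by simp
      have "?N \<in> I (2 * ?e + 2 * v x2)"
        unfolding N_ident[of x1 D x2 s] using I_add[OF t0 I_diff[OF t1 t2]] .
      then have "v ?N \<ge> 2 * ?e + 2 * v x2" using Nne by (simp add: memI)
      then have vN2: "v ?N = 2 * (?e + v x2)" using vN dy by simp
      moreover have "\<forall>j. (?d \<in> I j \<and> x2 \<in> I (j - ?e)) \<longleftrightarrow> j \<le> ?e + v x2"
        using ge x2 by (auto simp: memI)
      ultimately show ?thesis using Nne by (intro conjI exI[of _ "?e + v x2"]) auto
    qed
  qed
qed

end

context dvp begin

lemma N_mem:
  assumes two: "(2::'a) \<noteq> 0" and qd: "quad_defect v D = principal v 4"
    and sb: "v (D - s ^ 2) = 2 * v 2" "D - s ^ 2 \<noteq> 0" and s0: "s \<noteq> 0" "v s = 0"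
  shows "x1 ^ 2 - D * x2 ^ 2 \<in> I j \<longleftrightarrow>
          (x1 - s * x2 \<in> I ((j + 1) div 2) \<and> x2 \<in> I ((j + 1) div 2 - v 2))"
proof (cases "x1 = 0 \<and> x2 = 0")
  case True then show ?thesis by simp
next
  case False
  then have nz: "x1 \<noteq> 0 \<or> x2 \<noteq> 0" by blast
  obtain h where h: "x1 ^ 2 - D * x2 ^ 2 \<noteq> 0" "v (x1 ^ 2 - D * x2 ^ 2) = 2 * h"
    "\<forall>j. (x1 - s * x2 \<in> I j \<and> x2 \<in> I (j - v 2)) \<longleftrightarrow> j \<le> h"
    using Kval[OF two qd sb s0 nz] by blast
  have "x1 ^ 2 - D * x2 ^ 2 \<in> I j \<longleftrightarrow> j \<le> 2 * h" using h(1,2) by (simp add: memI)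
  also have "\<dots> \<longleftrightarrow> (j + 1) div 2 \<le> h" by presburger
  also have "\<dots> \<longleftrightarrow> (x1 - s * x2 \<in> I ((j + 1) div 2) \<and> x2 \<in> I ((j + 1) div 2 - v 2))"
    using h(3) by simp
  finally show ?thesis .
qed

lemma principal_2pi: "(2::'a) \<noteq> 0 \<Longrightarrow> principal v (2 * \<pi> ^ l) = I (v 2 + int l)"
proof -
  assume two: "(2::'a) \<noteq> 0"
  have ne: "2 * \<pi> ^ l \<noteq> 0" using two pipow_ne by simp
  have "v (2 * \<pi> ^ l) = v 2 + int l" using vmult[OF two pipow_ne] vpipow by simp
  then show ?thesis using principal_eq[OF ne] by simp
qed

lemma S_le:
  assumes two: "(2::'a) \<noteq> 0" and qd: "quad_defect v D = principal v 4"
    and sb: "v (D - s ^ 2) = 2 * v 2" "D - s ^ 2 \<noteq> 0" and s0: "s \<noteq> 0" "v s = 0"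
    and e: "v 2 = int e" and t: "t \<noteq> 0" "v t = int T" and le: "e + l \<le> 2 * T"
  shows "{x \<in> I 0 \<times> I 0. (\<lambda>(x1, x2). \<pi> * (x1 ^ 2 - D * x2 ^ 2)) x - (t ^ 2) \<in> principal v (2 * \<pi> ^ l)}
       = {p. fst p - s * snd p \<in> I (int ((e + l) div 2)) \<and> snd p \<in> I (int ((e + l) div 2 - e))}"
proof -
  let ?A = "(e + l) div 2"
  have sI: "s \<in> I 0" using s0 by (simp add: memI)
  have tI: "t ^ 2 \<in> I (int e + int l)" using t le v2sq[OF t(1)] by (simp add: memI)
  have key: "(\<pi> * (x1 ^ 2 - D * x2 ^ 2) - (t ^ 2) \<in> I (int e + int l)) \<longleftrightarrow>
       (x1 - s * x2 \<in> I (int ?A) \<and> x2 \<in> I (int ?A - int e))" for x1 x2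
  proof -
    let ?N = "x1 ^ 2 - D * x2 ^ 2"
    have "(\<pi> * ?N - (t ^ 2) \<in> I (int e + int l)) \<longleftrightarrow> \<pi> * ?N \<in> I (int e + int l)"
    proof
      assume "\<pi> * ?N - (t ^ 2) \<in> I (int e + int l)"
      from I_add[OF this tI] show "\<pi> * ?N \<in> I (int e + int l)" by simp
    next
      assume "\<pi> * ?N \<in> I (int e + int l)"
      from I_diff[OF this tI] show "\<pi> * ?N - (t ^ 2) \<in> I (int e + int l)" .
    qed
    also have "\<dots> \<longleftrightarrow> ?N \<in> I (int e + int l - 1)"
      using scale_I[of ?N "int e + int l - 1" 1] by simp
    also have "\<dots> \<longleftrightarrow> (x1 - s * x2 \<in> I ((int e + int l - 1 + 1) div 2) \<and>
                     x2 \<in> I ((int e + int l - 1 + 1) div 2 - v 2))"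
      by (rule N_mem[OF two qd sb s0])
    also have "(int e + int l - 1 + 1) div 2 = int ?A" by simp
    finally show ?thesis using e by simp
  qed
  show ?thesis
  proof (rule set_eqI)
    fix p :: "'a \<times> 'a"
    obtain x1 x2 where p: "p = (x1, x2)" by fastforce
    have "p \<in> {x \<in> I 0 \<times> I 0. (\<lambda>(x1, x2). \<pi> * (x1 ^ 2 - D * x2 ^ 2)) x - (t ^ 2) \<in> principal v (2 * \<pi> ^ l)}
      \<longleftrightarrow> x1 \<in> I 0 \<and> x2 \<in> I 0 \<and> (x1 - s * x2 \<in> I (int ?A) \<and> x2 \<in> I (int ?A - int e))"
      unfolding p principal_2pi[OF two] e using key by simp
    also have "\<dots> \<longleftrightarrow> (x1 - s * x2 \<in> I (int ?A) \<and> x2 \<in> I (int (?A - e)))"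
    proof
      assume h: "x1 \<in> I 0 \<and> x2 \<in> I 0 \<and> (x1 - s * x2 \<in> I (int ?A) \<and> x2 \<in> I (int ?A - int e))"
      have "int (?A - e) = max 0 (int ?A - int e)" by simp
      then have "x2 \<in> I (int (?A - e))" using h by (cases "int ?A - int e \<le> 0") (simp_all add: max_def)
      then show "x1 - s * x2 \<in> I (int ?A) \<and> x2 \<in> I (int (?A - e))" using h by simp
    next
      assume h: "x1 - s * x2 \<in> I (int ?A) \<and> x2 \<in> I (int (?A - e))"
      have x2: "x2 \<in> I 0" "x2 \<in> I (int ?A - int e)" using h I_mono[of _ "int (?A - e)" x2] by auto
      have "x1 - s * x2 \<in> I 0" using h I_mono[of 0 "int ?A"] by simp
      moreover have "s * x2 \<in> I 0" using I_mult[OF sI x2(1)] by simp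
      ultimately have "(x1 - s * x2) + s * x2 \<in> I 0" by (rule I_add)
      then show "x1 \<in> I 0 \<and> x2 \<in> I 0 \<and> (x1 - s * x2 \<in> I (int ?A) \<and> x2 \<in> I (int ?A - int e))"
        using h x2 by simp
    qed
    finally show "p \<in> {x \<in> I 0 \<times> I 0. (\<lambda>(x1, x2). \<pi> * (x1 ^ 2 - D * x2 ^ 2)) x - (t ^ 2) \<in> principal v (2 * \<pi> ^ l)}
      \<longleftrightarrow> p \<in> {p. fst p - s * snd p \<in> I (int ?A) \<and> snd p \<in> I (int (?A - e))}"
      unfolding p by simp
  qed
qed

lemma S_gt:
  assumes two: "(2::'a) \<noteq> 0" and qd: "quad_defect v D = principal v 4"
    and sb: "v (D - s ^ 2) = 2 * v 2" "D - s ^ 2 \<noteq> 0" and s0: "s \<noteq> 0" "v s = 0"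
    and e: "v 2 = int e" and t: "t \<noteq> 0" "v t = int T" and gt: "2 * T < e + l"
  shows "{x \<in> I 0 \<times> I 0. (\<lambda>(x1, x2). \<pi> * (x1 ^ 2 - D * x2 ^ 2)) x - (t ^ 2) \<in> principal v (2 * \<pi> ^ l)} = {}"
proof (rule ccontr)
  assume "\<not> ?thesis"
  then obtain x1 x2 where "\<pi> * (x1 ^ 2 - D * x2 ^ 2) - (t ^ 2) \<in> I (int e + int l)"
    unfolding principal_2pi[OF two] e by auto
  moreover define y where "y = \<pi> * (x1 ^ 2 - D * x2 ^ 2)"
  ultimately have yI: "y - (t ^ 2) \<in> I (int e + int l)" by simp
  have t2: "t ^ 2 \<noteq> 0" "v (t ^ 2) = 2 * int T" using t v2sq[OF t(1)] by auto
  have mt: "- (t ^ 2) \<noteq> 0" "v (- (t ^ 2)) = 2 * int T" using t2 vneg[OF t2(1)] by auto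
  show False
  proof (cases "x1 = 0 \<and> x2 = 0")
    case True
    then have "y = 0" unfolding y_def by simp
    then have "- (t ^ 2) \<in> I (int e + int l)" using yI by simp
    then show False using mt gt by (simp add: memI)
  next
    case False
    then have nz: "x1 \<noteq> 0 \<or> x2 \<noteq> 0" by blast
    obtain h where h: "x1 ^ 2 - D * x2 ^ 2 \<noteq> 0" "v (x1 ^ 2 - D * x2 ^ 2) = 2 * h"
      using Kval[OF two qd sb s0 nz] by blast
    have yne: "y \<noteq> 0" using h pi_ne unfolding y_def by simp
    have vy: "v y = 1 + 2 * h" unfolding y_def using vmult[OF pi_ne h(1)] h vpi by simp
    show False
    proof (cases "v y < 2 * int T")
      case True
      then have "- (t ^ 2) \<in> I (v y + 1)" using mt by (simp add: memI)
      from I_strict[OF yne this] have "y - (t ^ 2) \<noteq> 0" "v (y - (t ^ 2)) = v y" by simp_all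
      then show False using yI True gt by (simp add: memI)
    next
      case False
      then have "v y > 2 * int T" using vy by presburger
      then have "y \<in> I (v (- (t ^ 2)) + 1)" using mt by (simp add: memI)
      from I_strict[OF mt(1) this] have "y - (t ^ 2) \<noteq> 0" "v (y - (t ^ 2)) = 2 * int T" using mt by simp_all
      then show False using yI gt by (simp add: memI)
    qed
  qed
qed

lemma S_char2:
  assumes two: "(2::'a) = 0" and qd: "quad_defect v D = principal v 4"
    and t: "t \<noteq> 0" "v t = int T"
  shows "{x \<in> I 0 \<times> I 0. (\<lambda>(x1, x2). \<pi> * (x1 ^ 2 - D * x2 ^ 2)) x - (t ^ 2) \<in> principal v (2 * \<pi> ^ l)} = {}"
proof (rule ccontr)
  assume "\<not> ?thesis"
  then obtain x1 x2 where "\<pi> * (x1 ^ 2 - D * x2 ^ 2) - (t ^ 2) \<in> principal v 0"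
    using two by auto
  then have eq: "\<pi> * (x1 ^ 2 - D * x2 ^ 2) = t ^ 2" by (simp add: principal_def)
  have t2: "t ^ 2 \<noteq> 0" "v (t ^ 2) = 2 * int T" using t v2sq[OF t(1)] by auto
  have sq2: "\<And>a r::'a. (a - r) ^ 2 = a ^ 2 - r ^ 2"
  proof -
    fix a r :: 'a
    have "(a - r) ^ 2 - (a ^ 2 - r ^ 2) = 2 * (r ^ 2 - a * r)" by (simp add: algebra_simps power2_eq_square)
    then show "(a - r) ^ 2 = a ^ 2 - r ^ 2" using two by simp
  qed
  show False
  proof (cases "x2 = 0")
    case True
    then have eq1: "\<pi> * x1 ^ 2 = t ^ 2" using eq by simp
    then have x1: "x1 \<noteq> 0" using t2 by auto
    have "v (\<pi> * x1 ^ 2) = 1 + 2 * v x1" using vmult[OF pi_ne, of "x1^2"] x1 v2sq[OF x1] vpi by simp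
    then have "1 + 2 * v x1 = 2 * int T" using eq1 t2 by simp
    then show False by presburger
  next
    case x2: False
    define a where "a = x1 / x2"
    define c where "c = t ^ 2 / (\<pi> * x2 ^ 2)"
    have px: "\<pi> * x2 ^ 2 \<noteq> 0" using pi_ne x2 by simp
    have cne: "c \<noteq> 0" unfolding c_def using t2 px by simp
    have vpx: "v (\<pi> * x2 ^ 2) = 1 + 2 * v x2" using vmult[OF pi_ne, of "x2^2"] x2 v2sq[OF x2] vpi by simp
    have vc: "v c = 2 * int T - 1 - 2 * v x2" unfolding c_def using vdiv[OF t2(1) px] t2 vpx by simp
    have Dac: "D = a ^ 2 - c"
    proof -
      have "x1 ^ 2 - D * x2 ^ 2 = t ^ 2 / \<pi>" using eq pi_ne by (simp add: field_simps)
      then show ?thesis unfolding a_def c_def using x2 pi_ne by (simp add: field_simps power2_eq_square)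
    qed
    define y where "y = c * \<pi>"
    have yne: "y \<noteq> 0" unfolding y_def using cne pi_ne by simp
    have vyc: "v y = v c + 1" unfolding y_def using vmult[OF cne pi_ne] vpi by simp
    have "y \<notin> principal v 4"
    proof -
      have "(4::'a) = 0" using two by (metis mult_2_right mult_zero_left numeral_Bit0 one_add_one)
      then show ?thesis using yne by (simp add: principal_def)
    qed
    then obtain b r where br: "D - b = r ^ 2" "y \<notin> principal v b"
      unfolding qd[symmetric] quad_defect_mem by blast
    have bI: "b \<in> I (v c + 1)"
    proof (cases "b = 0")
      case True then show ?thesis by simp
    next
      case False
      then have "\<not> v b \<le> v y" using br(2) yne unfolding principal_eq[OF False] by (simp add: memI)
      then show ?thesis using vyc by (simp add: memI)
    qed
    have a2: "a ^ 2 = D + c" using Dac by simp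
    have r2: "r ^ 2 = D - b" using br(1) by simp
    have "(a - r) ^ 2 = (D + c) - (D - b)" unfolding sq2 a2 r2 ..
    then have "(a - r) ^ 2 = c + b" by simp
    moreover from I_strict[OF cne bI] have "c + b \<noteq> 0" "v (c + b) = v c" by simp_all
    ultimately have ar: "a - r \<noteq> 0" "2 * v (a - r) = v c"
    proof -
      assume h: "(a - r) ^ 2 = c + b" "c + b \<noteq> 0" "v (c + b) = v c"
      then show ar: "a - r \<noteq> 0" by (metis zero_power2)
      show "2 * v (a - r) = v c" using v2sq[OF ar] h by simp
    qed
    then show False using vc by presburger
  qed
qed

end

definition Fsum :: "complex \<Rightarrow> complex \<Rightarrow> nat \<Rightarrow> nat \<Rightarrow> complex" where
  "Fsum z u e T = (\<Sum>l\<le>2 * T - e. z ^ l * u ^ ((e + l) div 2 + ((e + l) div 2 - e)))"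

definition Gcl :: "complex \<Rightarrow> complex \<Rightarrow> nat \<Rightarrow> nat \<Rightarrow> complex" where
  "Gcl z u e T = (let w = z * u in
     (u ^ (e div 2) + z * u ^ ((e + 1) div 2) - z * w ^ e * (z * w) powi (min (int T - int e) 0) * (w + 1)) / (1 - z * w)
     + w ^ e * (z + w ^ 2) * (1 - w ^ (2 * nat (int T - int e))) / (1 - w ^ 2))"

lemma G_lt:
  assumes "T \<le> e"
  shows "Gcl z u e T = (u ^ (e div 2) + z * u ^ ((e + 1) div 2) - z * (z*u) ^ e * (z * u + 1) / (z * (z*u)) ^ (e - T)) / (1 - z * (z*u))"
proof -
  have m: "min (int T - int e) 0 = - int (e - T)" using assms by simp
  have n: "nat (int T - int e) = 0" using assms by simp
  show ?thesis unfolding Gcl_def Let_def m n power_int_minus power_int_of_nat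
    by (simp add: divide_inverse)
qed

lemma G_ge:
  assumes "e \<le> T"
  shows "Gcl z u e T = (u ^ (e div 2) + z * u ^ ((e + 1) div 2) - z * (z*u) ^ e * (z * u + 1)) / (1 - z * (z*u))
     + (z*u) ^ e * (z + (z*u) ^ 2) * (1 - (z*u) ^ (2 * (T - e))) / (1 - (z*u) ^ 2)"
proof -
  have m: "min (int T - int e) 0 = 0" using assms by simp
  have n: "nat (int T - int e) = T - e" using assms by simp
  show ?thesis unfolding Gcl_def Let_def m n by simp
qed

lemma F_step:
  assumes "e \<le> 2 * T"
  shows "Fsum z u e (Suc T) = Fsum z u e T + z ^ (2 * T - e + 1) * u ^ (T + (T - e))
           + z ^ (2 * T - e + 2) * u ^ (T + 1 + (T + 1 - e))"
proof -
  have n: "2 * Suc T - e = Suc (Suc (2 * T - e))" using assms by simp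
  have a1: "(e + Suc (2 * T - e)) div 2 = T" using assms by simp
  have a2: "(e + Suc (Suc (2 * T - e))) div 2 = T + 1" using assms by simp
  show ?thesis unfolding Fsum_def n sum.atMost_Suc a1 a2
    by (simp add: algebra_simps)
qed

lemma alg1:
  fixes P M Y c :: complex
  assumes "Y \<noteq> 0" "c \<noteq> 0" "1 - c \<noteq> 0"
  shows "(P - M * (Y * c) / Y) / (1 - c) = (P - M * (Y * c) / (Y * c)) / (1 - c) + M"
  using assms by (simp add: field_simps)

lemma alg2:
  fixes Q A W V :: complex
  assumes "1 - V \<noteq> 0"
  shows "Q + A * (1 - W * V) / (1 - V) = Q + A * (1 - W) / (1 - V) + A * W"
  using assms by (simp add: field_simps)

lemma G_step:
  assumes z: "z \<noteq> 0" and u: "u \<noteq> 0" and d1: "1 - z * (z * u) \<noteq> 0" and d2: "1 - (z * u) ^ 2 \<noteq> 0"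
    and le: "e \<le> 2 * T"
  shows "Gcl z u e (Suc T) = Gcl z u e T + (z ^ (2 * T - e + 1) * u ^ (T + (T - e))
           + z ^ (2 * T - e + 2) * u ^ (T + 1 + (T + 1 - e)))"
proof (cases "T < e")
  case True
  define k where "k = e - T"
  define r where "r = 2 * T - e"
  have k1: "k \<ge> 1" and e_eq: "e = r + 2 * k" and T_eq: "T = r + k" using True le unfolding k_def r_def by auto
  let ?P = "u ^ (e div 2) + z * u ^ ((e + 1) div 2)"
  let ?w = "z * u"
  have zw: "z * ?w \<noteq> 0" using z u by simp
  have G1: "Gcl z u e (Suc T) = (?P - z * ?w ^ e * (?w + 1) / (z * ?w) ^ (k - 1)) / (1 - z * ?w)"
    using G_lt[of "Suc T" e z u] True unfolding k_def by (simp add: Suc_diff_Suc)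
  have G0: "Gcl z u e T = (?P - z * ?w ^ e * (?w + 1) / (z * ?w) ^ k) / (1 - z * ?w)"
    using G_lt[of T e z u] True unfolding k_def by simp
  have key: "z * ?w ^ e * (?w + 1) = (z ^ (r + 1) * u ^ (r + k) + z ^ (r + 2) * u ^ (r + k + 1)) * (z * ?w) ^ k"
    unfolding e_eq mult_2 power_add power_mult_distrib by (simp add: algebra_simps power2_eq_square)
  have pk: "(z * ?w) ^ k = (z * ?w) ^ (k - 1) * (z * ?w)"
  proof -
    obtain k' where "k = Suc k'" using k1 by (cases k) auto
    then show ?thesis by simp
  qed
  have inc: "z ^ (2 * T - e + 1) * u ^ (T + (T - e)) + z ^ (2 * T - e + 2) * u ^ (T + 1 + (T + 1 - e))
       = z ^ (r + 1) * u ^ (r + k) + z ^ (r + 2) * u ^ (r + k + 1)"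
  proof -
    have a: "2 * T - e = r" "T + (T - e) = r + k" "T + 1 + (T + 1 - e) = r + k + 1"
      using True T_eq unfolding r_def by auto
    show ?thesis unfolding a by (simp add: add.assoc)
  qed
  have Y: "(z * ?w) ^ (k - 1) \<noteq> 0" using zw by simp
  show ?thesis unfolding G1 G0 inc key pk
    using alg1[OF Y zw d1, of ?P "z ^ (r + 1) * u ^ (r + k) + z ^ (r + 2) * u ^ (r + k + 1)"]
    by simp
next
  case False
  define p where "p = T - e"
  let ?P = "u ^ (e div 2) + z * u ^ ((e + 1) div 2)"
  let ?w = "z * u"
  have G1: "Gcl z u e (Suc T) = (?P - z * ?w ^ e * (?w + 1)) / (1 - z * ?w)
     + ?w ^ e * (z + ?w ^ 2) * (1 - ?w ^ (2 * (p + 1))) / (1 - ?w ^ 2)"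
    using G_ge[of e "Suc T" z u] False unfolding p_def by (simp add: Suc_diff_le)
  have G0: "Gcl z u e T = (?P - z * ?w ^ e * (?w + 1)) / (1 - z * ?w)
     + ?w ^ e * (z + ?w ^ 2) * (1 - ?w ^ (2 * p)) / (1 - ?w ^ 2)"
    using G_ge[of e T z u] False unfolding p_def by simp
  have inc: "z ^ (2 * T - e + 1) * u ^ (T + (T - e)) + z ^ (2 * T - e + 2) * u ^ (T + 1 + (T + 1 - e))
       = ?w ^ (e + 2 * p) * (z + ?w ^ 2)"
  proof -
    have a: "2 * T - e = e + 2 * p" "T + (T - e) = e + 2 * p" "T + 1 + (T + 1 - e) = e + 2 * p + 2"
      using False unfolding p_def by auto
    show ?thesis unfolding a by (simp add: power_add power_mult_distrib algebra_simps power2_eq_square)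
  qed
  have pw: "?w ^ (2 * (p + 1)) = ?w ^ (2 * p) * ?w ^ 2"
    by (metis mult.commute mult_2 nat_distrib(1) power_add power_one_right power2_eq_square mult_1)
  have "?w ^ (2 * p) * ?w ^ 2 = ?w ^ (2 * p) * ?w ^ 2" ..
  show ?thesis unfolding G1 G0 inc pw
    using alg2[OF d2, of "(?P - z * ?w ^ e * (?w + 1)) / (1 - z * ?w)" "?w ^ e * (z + ?w ^ 2)" "?w ^ (2 * p)"]
    by (simp add: power_add mult.assoc power2_eq_square)
qed

lemma F_base:
  assumes z: "z \<noteq> 0" and u: "u \<noteq> 0" and d1: "1 - z * (z * u) \<noteq> 0"
  shows "Fsum z u e ((e + 1) div 2) = Gcl z u e ((e + 1) div 2)"
proof (cases "even e")
  case True
  then obtain k where e: "e = 2 * k" by blast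
  have T0: "(e + 1) div 2 = k" using e by simp
  have F: "Fsum z u e k = u ^ k" unfolding Fsum_def e by simp
  have G: "Gcl z u e k = (u ^ k + z * u ^ k - z * (z*u) ^ (2*k) * (z * u + 1) / (z * (z*u)) ^ k) / (1 - z * (z*u))"
    using G_lt[of k e z u] e by simp
  have key: "z * (z*u) ^ (2*k) * (z * u + 1) = z * u ^ k * (z * u + 1) * (z * (z*u)) ^ k"
    unfolding mult_2 power_add power_mult_distrib by (simp add: algebra_simps)
  have zw: "(z * (z*u)) ^ k \<noteq> 0" using z u by simp
  show ?thesis unfolding T0 F G key using zw d1 by (simp add: field_simps)
next
  case False
  then obtain k where e: "e = 2 * k + 1" using oddE by blast
  have T0: "(e + 1) div 2 = k + 1" using e by simp
  have F: "Fsum z u e (k + 1) = u ^ k + z * u ^ (k + 1)" unfolding Fsum_def e by simp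
  have G: "Gcl z u e (k + 1) = (u ^ k + z * u ^ (k + 1) - z * (z*u) ^ (2*k+1) * (z * u + 1) / (z * (z*u)) ^ k) / (1 - z * (z*u))"
    using G_lt[of "k + 1" e z u] e by simp
  have key: "z * (z*u) ^ (2*k+1) * (z * u + 1) = z * z * u ^ (k + 1) * (z * u + 1) * (z * (z*u)) ^ k"
    unfolding mult_2 power_add power_mult_distrib by (simp add: algebra_simps)
  have zw: "(z * (z*u)) ^ k \<noteq> 0" using z u by simp
  show ?thesis unfolding T0 F G key using zw d1 by (simp add: field_simps)
qed

lemma F_eq_G:
  assumes z: "z \<noteq> 0" and u: "u \<noteq> 0" and d1: "1 - z * (z * u) \<noteq> 0" and d2: "1 - (z * u) ^ 2 \<noteq> 0"
    and le: "e \<le> 2 * T"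
  shows "Fsum z u e T = Gcl z u e T"
proof -
  have T0: "(e + 1) div 2 \<le> T" using le by simp
  show ?thesis using T0
  proof (induction T rule: dec_induct)
    case base then show ?case using F_base[OF z u d1] .
  next
    case (step n)
    have len: "e \<le> 2 * n" using step.hyps(1) by simp
    show ?case using F_step[OF len] G_step[OF z u d1 d2 len] step.IH by simp
  qed
qed

lemma q_ge2:
  assumes "dvp v \<pi> q"
  shows "q \<ge> 2"
proof -
  interpret dvp v \<pi> q by fact
  have c0: "Rel 1 `` {0} \<in> I 0 // Rel 1" by (rule quotientI) simp
  have c1: "Rel 1 `` {1} \<in> I 0 // Rel 1" by (rule quotientI) (rule one_I0)
  have "(0::'a, 1) \<notin> Rel 1" unfolding Rel_def using vm1 by (simp add: memI)
  then have ne: "Rel 1 `` {0} \<noteq> Rel 1 `` {1}" using class_eq_iff by blast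
  have "card {Rel 1 `` {0}, Rel 1 `` {1}} \<le> card (I 0 // Rel 1)"
    by (rule card_mono) (use q_Rel c0 c1 in auto)
  then show ?thesis using ne q_Rel by simp
qed

theorem proposition6p3:
  fixes v :: "'a::field \<Rightarrow> int" and q :: nat and \<pi> \<Delta> t :: 'a and T :: nat
    and \<beta> z w :: complex
  assumes "nonarch_local_field v q"
    and "residue_char_two v"
    and "\<pi> \<noteq> 0" and "v \<pi> = 1"
    and "\<Delta> \<noteq> 0" and "v \<Delta> = 0"
    and "quad_defect v \<Delta> = principal v 4"
    and "t \<in> ring_int v" and "t \<noteq> 0" and "v t = int T"
    and "0 < Re \<beta>"
    and "z = (of_nat q) powr (- \<beta>)" and "w = z / of_nat q"
  shows "(enat (2 * T) < ord2 v \<longrightarrow>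
           (\<lambda>l. z ^ l * of_real (Xl v q \<pi> (\<lambda>(x1, x2). \<pi> * (x1 ^ 2 - \<Delta> * x2 ^ 2)) (t ^ 2) l))
             sums 0)
       \<and> (ord2 v \<le> enat (2 * T) \<longrightarrow>
           (let e = the_enat (ord2 v) in
           (\<lambda>l. z ^ l * of_real (Xl v q \<pi> (\<lambda>(x1, x2). \<pi> * (x1 ^ 2 - \<Delta> * x2 ^ 2)) (t ^ 2) l))
             sums
             ((of_real ((1 / real q) ^ (e div 2)) + z * of_real ((1 / real q) ^ ((e + 1) div 2))
                - z * w ^ e * (z * w) powi (min (int T - int e) 0) * (w + 1)) / (1 - z * w)
              + w ^ e * (z + w ^ 2) * (1 - w ^ (2 * nat (int T - int e))) / (1 - w ^ 2))))"
proof -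
  note nl = assms(1)[unfolded nonarch_local_field_def]
  interpret dvp v \<pi> q
    by unfold_locales (use nl assms(3,4) in auto)
  have dvpI: "dvp v \<pi> q" by unfold_locales
  have q2: "q \<ge> 2" using q_ge2[OF dvpI] .
  let ?B = "\<lambda>(x1, x2). \<pi> * (x1 ^ 2 - \<Delta> * x2 ^ 2)"
  let ?f = "\<lambda>l. z ^ l * of_real (Xl v q \<pi> ?B (t ^ 2) l)"
  have qd: "quad_defect v \<Delta> = principal v 4" by fact
  show ?thesis
  proof (cases "(2::'a) = 0")
    case True
    have "ord2 v = \<infinity>" unfolding ord2_def using True by simp
    moreover have "\<And>l. Xl v q \<pi> ?B (t ^ 2) l = 0"
      unfolding Xl_def S_char2[OF True qd assms(9,10)] by (rule haar2_empty)
    ultimately show ?thesis by simp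
  next
    case two: False
    have ve1: "v 2 \<ge> 1" using assms(2) two unfolding residue_char_two_def by (simp add: memI)
    define e where "e = nat (v 2)"
    have ve: "v 2 = int e" unfolding e_def using ve1 by simp
    have e1: "e \<ge> 1" using ve1 ve by simp
    have ord: "ord2 v = enat e" unfolding ord2_def e_def using two by simp
    obtain s where s1: "2 * v 2 \<le> v (\<Delta> - s ^ 2)" using def_i[OF two qd ve1] by blast
    have s2: "\<Delta> - s ^ 2 \<noteq> 0" "v (\<Delta> - s ^ 2) \<le> 2 * v 2" using def_ii[OF two qd] by auto
    have sb: "v (\<Delta> - s ^ 2) = 2 * v 2" "\<Delta> - s ^ 2 \<noteq> 0" using s1 s2 by auto
    have s0: "s \<noteq> 0" "v s = 0"
    proof -
      have "- (\<Delta> - s ^ 2) \<in> I (v \<Delta> + 1)" using sb assms(6) ve1 vneg[OF sb(2)] by (simp add: memI)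
      from I_strict[OF assms(5) this] have "s ^ 2 \<noteq> 0" "v (s ^ 2) = 0" using assms(6) by simp_all
      then show s: "s \<noteq> 0" and "v s = 0" using v2sq by auto
    qed
    have sI: "s \<in> I 0" using s0 by (simp add: memI)
    have X: "Xl v q \<pi> ?B (t ^ 2) l =
        (if e + l \<le> 2 * T then (1 / real q) ^ ((e + l) div 2 + ((e + l) div 2 - e)) else 0)" for l
    proof (cases "e + l \<le> 2 * T")
      case True
      show ?thesis unfolding Xl_def using S_le[OF two qd sb s0 ve assms(9,10) True] haar_box[OF sI] True by simp
    next
      case False
      then have gt: "2 * T < e + l" by simp
      show ?thesis using False unfolding Xl_def S_gt[OF two qd sb s0 ve assms(9,10) gt] haar2_empty by simp
    qed
    show ?thesis
    proof (intro conjI impI)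
      assume "enat (2 * T) < ord2 v"
      then have "2 * T < e" using ord by simp
      then have "\<And>l. Xl v q \<pi> ?B (t ^ 2) l = 0" using X by simp
      then show "?f sums 0" by simp
    next
      assume "ord2 v \<le> enat (2 * T)"
      then have le: "e \<le> 2 * T" using ord by simp
      define u where "u = (of_real (1 / real q) :: complex)"
      have wzu: "w = z * u" unfolding u_def assms(13) by (simp add: divide_inverse)
      have qpos: "real q > 0" using q2 by simp
      have u0: "u \<noteq> 0" unfolding u_def using qpos by simp
      have nu: "norm u \<le> 1 / 2"
      proof -
        have "norm u = \<bar>1 / real q\<bar>" unfolding u_def by (rule norm_of_real)
        also have "\<dots> = 1 / real q" using qpos by simp
        also have "\<dots> \<le> 1 / 2" using q2 by (simp add: field_simps)
        finally show ?thesis .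
      qed
      have z0: "z \<noteq> 0" unfolding assms(12) using qpos by (simp add: powr_def)
      have nz: "norm z \<le> 1"
      proof -
        have "norm z = real q powr (- Re \<beta>)" unfolding assms(12)
          by (subst norm_powr_real_powr) auto
        also have "\<dots> \<le> 1" using q2 assms(11) by (simp add: powr_minus ge_one_powr_ge_zero field_simps)
        finally show ?thesis .
      qed
      have nzw: "norm (z * (z * u)) < 1"
      proof -
        have "norm (z * (z * u)) = norm z * (norm z * norm u)" by (simp add: norm_mult)
        also have "\<dots> \<le> 1 * (1 * (1/2))" using nz nu by (intro mult_mono) auto
        finally show ?thesis by simp
      qed
      have nw2: "norm ((z * u) ^ 2) < 1"
      proof -
        have "norm ((z * u) ^ 2) = (norm z * norm u) ^ 2" by (simp add: norm_mult norm_power)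
        also have "\<dots> \<le> (1 * (1/2)) ^ 2" using nz nu by (intro power_mono mult_mono) auto
        finally show ?thesis by (simp add: power2_eq_square)
      qed
      have d1: "1 - z * (z * u) \<noteq> 0" using nzw by auto
      have d2: "1 - (z * u) ^ 2 \<noteq> 0" using nw2 by auto
      have fz: "?f l = 0" if "l \<notin> {..2 * T - e}" for l using that X le by auto
      have "?f sums (\<Sum>l\<le>2 * T - e. ?f l)" by (rule sums_finite) (use fz in auto)
      moreover have "(\<Sum>l\<le>2 * T - e. ?f l) = Fsum z u e T"
        unfolding Fsum_def
      proof (rule sum.cong)
        fix l assume "l \<in> {..2 * T - e}"
        then have "e + l \<le> 2 * T" using le by simp
        then show "?f l = z ^ l * u ^ ((e + l) div 2 + ((e + l) div 2 - e))"
          unfolding X u_def by (simp add: of_real_power)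
      qed simp
      moreover have "Fsum z u e T = Gcl z u e T" by (rule F_eq_G[OF z0 u0 d1 d2 le])
      moreover have "Gcl z u e T =
             ((of_real ((1 / real q) ^ (e div 2)) + z * of_real ((1 / real q) ^ ((e + 1) div 2))
                - z * w ^ e * (z * w) powi (min (int T - int e) 0) * (w + 1)) / (1 - z * w)
              + w ^ e * (z + w ^ 2) * (1 - w ^ (2 * nat (int T - int e))) / (1 - w ^ 2))"
        unfolding Gcl_def Let_def wzu u_def by (simp add: of_real_power)
      ultimately show "let e = the_enat (ord2 v) in ?f sums
             ((of_real ((1 / real q) ^ (e div 2)) + z * of_real ((1 / real q) ^ ((e + 1) div 2))
                - z * w ^ e * (z * w) powi (min (int T - int e) 0) * (w + 1)) / (1 - z * w)
              + w ^ e * (z + w ^ 2) * (1 - w ^ (2 * nat (int T - int e))) / (1 - w ^ 2))"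
        unfolding ord Let_def by simp
    qed
  qed
qed

end
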